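(* Let $q=3^{2n+1}$ and $q=q_0^r$ with $r\neq3$ an odd prime. Then for any subfield $\mathbb{F}_{q_1}$ of $\mathbb{F}_q$ there exists $\lambda\in\mathbb{F}_{q_0}$ such that $\mathrm{Tr}_{\mathbb{F}_q/\mathbb{F}_{q_1}}(\lambda)\in\mathbb{F}_{q_1}^\times$. In particular there exists $\lambda_1\in\mathbb{F}_{q_0}$ such that $\mathrm{Tr}_{\mathbb{F}_q/\mathbb{F}_{q_1}}(\lambda_1)=1$.
   Context: For $q=q_1^k$, $\mathrm{Tr}_{\mathbb{F}_q/\mathbb{F}_{q_1}}(x)=x+x^{q_1}+\dots+x^{q_1^{k-1}}$. *)

theory Defs
  imports "HOL-Computational_Algebra.Primes"
begin

definition is_subfield :: "'a::field set \<Rightarrow> bool" where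
  "is_subfield K \<longleftrightarrow> 0 \<in> K \<and> 1 \<in> K \<and>
     (\<forall>x\<in>K. \<forall>y\<in>K. x + y \<in> K \<and> x * y \<in> K) \<and>
     (\<forall>x\<in>K. - x \<in> K) \<and> (\<forall>x\<in>K. x \<noteq> 0 \<longrightarrow> inverse x \<in> K)"

text \<open>Relative trace Tr_{F_q/F_{q1}}(x) = x + x^q1 + ... + x^(q1^(k-1)), where q = q1^k.\<close>
definition rel_trace :: "nat \<Rightarrow> nat \<Rightarrow> 'a::field \<Rightarrow> 'a" where
  "rel_trace q1 k x = (\<Sum>i<k. x ^ (q1 ^ i))"

end

theory Submission imports Defs "HOL-Number_Theory.Residues" "HOL-Computational_Algebra.Polynomial"
begin

lemma subfield_pow_card:
  fixes K :: "'a::field set"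
  assumes K: "is_subfield K" "finite K" and x: "x \<in> K"
  shows "x ^ card K = x"
proof (cases "x = 0")
  case True
  have "card K \<noteq> 0" using K x by auto
  then show ?thesis using True by simp
next
  case False
  have cl: "\<forall>a\<in>K. \<forall>b\<in>K. a * b \<in> K" and inv: "\<forall>a\<in>K. a \<noteq> 0 \<longrightarrow> inverse a \<in> K"
    using K(1) unfolding is_subfield_def by auto
  have "(\<Prod>y\<in>K-{0}. x * y) = (\<Prod>y\<in>K-{0}. y)"
    by (rule prod.reindex_bij_witness[of _ "\<lambda>y. y / x" "\<lambda>y. x * y"])
       (use False x cl inv in \<open>auto simp: divide_inverse\<close>)
  moreover have "(\<Prod>y\<in>K-{0}. x * y) = x ^ card (K-{0}) * (\<Prod>y\<in>K-{0}. y)"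
    by (simp add: prod.distrib)
  moreover have "(\<Prod>y\<in>K-{0}. y) \<noteq> 0" using K(2) by simp
  ultimately have "x ^ card (K-{0}) = 1" by simp
  moreover have "card K = Suc (card (K-{0}))"
    using K by (metis card_Suc_Diff1 is_subfield_def)
  ultimately show ?thesis by simp
qed

lemma roots_card_le:
  fixes N :: nat
  assumes "N \<ge> 2"
  shows "card {x::'a::field. x ^ N = x} \<le> N"
proof -
  define p :: "'a poly" where "p = monom 1 N - [:0,1:]"
  have cN: "coeff p N = 1" unfolding p_def using assms
    by (auto simp: coeff_monom coeff_pCons split: nat.split)
  have "\<forall>i>N. coeff p i = 0" unfolding p_def using assms
    by (auto simp: coeff_monom coeff_pCons split: nat.split)
  then have dp: "degree p = N" using cN
    by (metis antisym degree_le le_degree one_neq_zero)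
  then have "p \<noteq> 0" using assms by auto
  from card_poly_roots_bound[OF this] dp
  have "card {x. poly p x = 0} \<le> N" by simp
  moreover have "{x. poly p x = 0} = {x::'a. x ^ N = x}"
    by (auto simp: p_def poly_monom)
  ultimately show ?thesis by simp
qed

lemma subfield_eq_roots:
  fixes K :: "'a::field set"
  assumes K: "is_subfield K" "finite K"
  shows "K = {x. x ^ card K = x}"
proof -
  have sub: "K \<subseteq> {x. x ^ card K = x}" using subfield_pow_card[OF K] by auto
  have "0 \<in> K" "1 \<in> K" using K(1) unfolding is_subfield_def by auto
  then have "card {0::'a,1} \<le> card K" using K(2) by (intro card_mono) auto
  then have c2: "card K \<ge> 2" by simp
  have fin: "finite {x::'a. x ^ card K = x}"
  proof -
    have "{x::'a. x ^ card K = x} = {x. poly (monom 1 (card K) - [:0,1:]) x = 0}"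
      by (auto simp: poly_monom)
    moreover have "monom (1::'a) (card K) - [:0,1:] \<noteq> 0"
    proof
      assume "monom (1::'a) (card K) - [:0,1:] = 0"
      then have "coeff (monom (1::'a) (card K) - [:0,1:]) (card K) = 0" by simp
      then show False using c2 by (auto simp add: coeff_monom coeff_pCons split: nat.split nat.split_asm)
    qed
    ultimately show ?thesis using poly_roots_finite by metis
  qed
  show ?thesis
    using card_seteq[OF fin sub] roots_card_le[OF c2] by auto
qed


lemma count_lemma:
  fixes s d k r :: nat
  assumes "s > 0" "d > 0" "k * d = r * s" "prime r" "r \<noteq> 3"
  shows "\<not> 3 dvd card {i\<in>{..<k}. (d*i) mod s = 0}"
proof -
  define g where "g = gcd d s"
  define t where "t = s div g"
  define e where "e = d div g"
  have g0: "g > 0" using assms g_def by simp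
  have st: "s = t * g" unfolding t_def g_def by simp
  have de: "d = e * g" unfolding e_def g_def by simp
  have t0: "t > 0" using st assms by simp
  have cop: "coprime t e" unfolding t_def e_def g_def
    using div_gcd_coprime[of d s] assms by (simp add: ac_simps)
  have iff: "(d*i) mod s = 0 \<longleftrightarrow> t dvd i" for i
  proof -
    have "(d*i) mod s = 0 \<longleftrightarrow> t*g dvd e*g*i" using st de by (simp add: dvd_eq_mod_eq_0)
    also have "\<dots> \<longleftrightarrow> t dvd e*i" using g0 by (metis mult.assoc mult.commute dvd_mult_cancel2 mult_dvd_mono nat_mult_dvd_cancel_disj)
    also have "\<dots> \<longleftrightarrow> t dvd i" using cop by (simp add: coprime_dvd_mult_right_iff)
    finally show ?thesis .
  qed
  have ke: "k * e = r * t" using assms(3) st de g0 by (metis mult.assoc mult_right_cancel not_gr0 )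
  then have "t dvd k * e" by simp
  then have "t dvd k" using cop by (simp add: coprime_dvd_mult_left_iff)
  then obtain u where ku: "k = t * u" by auto
  have "{i\<in>{..<k}. (d*i) mod s = 0} = (\<lambda>j. t*j) ` {..<u}"
  proof (intro equalityI subsetI)
    fix i assume "i \<in> {i\<in>{..<k}. (d*i) mod s = 0}"
    then have "i < k" "t dvd i" using iff by auto
    then obtain j where "i = t*j" by auto
    then show "i \<in> (\<lambda>j. t*j) ` {..<u}" using \<open>i<k\<close> ku t0 by auto
  next
    fix i assume "i \<in> (\<lambda>j. t*j) ` {..<u}"
    then show "i \<in> {i\<in>{..<k}. (d*i) mod s = 0}" using iff ku t0 by auto
  qed
  moreover have "card ((\<lambda>j. t*j) ` {..<u}) = u"
    using t0 by (subst card_image) (auto simp: inj_on_def)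
  ultimately have cu: "card {i\<in>{..<k}. (d*i) mod s = 0} = u" by simp
  have "u * e = r" using ke ku t0 by (metis mult.assoc mult.commute mult_left_cancel not_gr0)
  then have "u dvd r" by (metis dvd_triv_left)
  show ?thesis
  proof
    assume "3 dvd card {i\<in>{..<k}. (d*i) mod s = 0}"
    then have "3 dvd r" using cu \<open>u dvd r\<close> by (metis dvd_trans)
    then have "3 = r" using assms(4) prime_nat_iff[of r] by (metis numeral_One num.simps(1) numeral_eq_iff semiring_norm(84))
    then show False using assms(5) by simp
  qed
qed


lemma trace_scale:
  fixes mu lam :: "'a::field"
  assumes "mu ^ q1 = mu"
  shows "rel_trace q1 k (mu * lam) = mu * rel_trace q1 k lam"
proof -
  have p: "mu ^ (q1 ^ i) = mu" for i
    by (induction i) (simp_all add: power_mult assms)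
  show ?thesis unfolding rel_trace_def
    by (simp add: power_mult_distrib p sum_distrib_left)
qed

lemma pow_mod:
  fixes x :: "'a::field"
  assumes "x ^ (3 ^ s) = x"
  shows "x ^ (3 ^ j) = x ^ (3 ^ (j mod s))"
proof -
  have a: "x ^ (3 ^ (s * a)) = x" for a
    by (induction a) (simp_all add: power_add power_mult assms)
  have "j = s * (j div s) + j mod s" by simp
  then have "x ^ (3 ^ j) = (x ^ (3 ^ (s * (j div s)))) ^ (3 ^ (j mod s))"
    by (metis power_add power_mult)
  then show ?thesis using a by simp
qed

lemma char3:
  assumes "card (UNIV::'a::{field,finite} set) = 3 ^ m"
  shows "CHAR('a) = 3"
proof -
  have "CHAR('a) > 0" by (rule finite_imp_CHAR_pos) simp
  then have pr: "prime CHAR('a)" by (rule prime_CHAR_semidom)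
  have "CHAR('a) dvd 3 ^ m" using CHAR_dvd_CARD[where 'a='a] assms by simp
  then have "CHAR('a) dvd 3" using pr prime_dvd_power by blast
  moreover have "prime (3::nat)" by simp
  ultimately have "CHAR('a) = 1 \<or> CHAR('a) = 3" unfolding prime_nat_iff by blast
  then show ?thesis using pr by auto
qed


theorem lemma4p3:
  fixes n r q0 :: nat
    and K0 :: "('a::{field,finite}) set"
  assumes "card (UNIV::'a set) = 3 ^ (2 * n + 1)"
    and "card (UNIV::'a set) = q0 ^ r"
    and "prime r" and "odd r" and "r \<noteq> 3"
    and "is_subfield K0" and "card K0 = q0"
  shows "\<forall>(K1::'a set) k. is_subfield K1 \<and> card K1 ^ k = card (UNIV::'a set) \<longrightarrow>
           (\<exists>lam\<in>K0. rel_trace (card K1) k lam \<in> K1 \<and> rel_trace (card K1) k lam \<noteq> 0) \<and>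
           (\<exists>lam1\<in>K0. rel_trace (card K1) k lam1 = 1)"
proof (intro allI impI)
  fix K1 :: "'a set" and k :: nat
  assume K1: "is_subfield K1 \<and> card K1 ^ k = card (UNIV::'a set)"
  define m where "m = 2 * n + 1"
  have C: "card (UNIV::'a set) = 3 ^ m" using assms(1) m_def by simp
  have m0: "m > 0" using m_def by simp
  have ch: "CHAR('a) = 3" using char3 C by blast
  have fd: "sum f A ^ (3 ^ j) = (\<Sum>i\<in>A. f i ^ (3 ^ j))" for f :: "nat \<Rightarrow> 'a" and A j
    by (rule freshmans_dream_sum') (simp_all add: ch)
  have r0: "r > 0" using assms(3) prime_gt_0_nat by blast
  have "q0 dvd 3 ^ m" using assms(2) C r0 by (metis dvd_power)
  then obtain s where s: "q0 = 3 ^ s" using divides_primepow_nat[of 3] by auto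
  have "3 ^ (s * r) = (3::nat) ^ m" using assms(2) C s by (simp add: power_mult)
  then have sr: "s * r = m" by (simp add: power_inject_exp)
  have s0: "s > 0" using sr m0 by (cases s) auto
  have g1: "(3::nat) ^ m > 1" using m0 one_less_power[of "3::nat" m] by simp
  have k0: "k > 0" using K1 C g1 by (cases k) auto
  have "card K1 dvd 3 ^ m" using K1 C k0 by (metis dvd_power)
  then obtain d where d: "card K1 = 3 ^ d" using divides_primepow_nat[of 3] by auto
  have "3 ^ (d * k) = (3::nat) ^ m" using K1 C d by (simp add: power_mult)
  then have dk: "d * k = m" by (simp add: power_inject_exp)
  have d0: "d > 0" using dk m0 by (cases d) auto
  have finK0: "finite K0" and finK1: "finite K1" by simp_all
  have K0r: "K0 = {x. x ^ (3 ^ s) = x}" using subfield_eq_roots[OF assms(6) finK0] assms(7) s by simp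
  have K1r: "K1 = {x. x ^ (3 ^ d) = x}" using subfield_eq_roots[of K1] K1 finK1 d by simp
  have univ: "x ^ (3 ^ m) = x" for x :: 'a
    using subfield_pow_card[of UNIV x] C by (simp add: is_subfield_def)
  define P :: "'a poly" where "P = (\<Sum>i<k. monom 1 (3 ^ ((d*i) mod s)))"
  define N where "N = card {i\<in>{..<k}. (d*i) mod s = 0}"
  have trP: "rel_trace (card K1) k lam = poly P lam" if "lam \<in> K0" for lam
  proof -
    have l: "lam ^ (3 ^ s) = lam" using that K0r by auto
    have "rel_trace (card K1) k lam = (\<Sum>i<k. lam ^ (3 ^ (d*i)))"
      unfolding rel_trace_def d by (simp add: power_mult)
    also have "\<dots> = (\<Sum>i<k. lam ^ (3 ^ ((d*i) mod s)))"
      using pow_mod[OF l] by simp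
    also have "\<dots> = poly P lam" unfolding P_def by (simp add: poly_sum poly_monom)
    finally show ?thesis .
  qed
  have "coeff P 1 = (\<Sum>i<k. if (d*i) mod s = 0 then 1 else 0)"
    unfolding P_def by (simp add: coeff_sum coeff_monom)
  also have "\<dots> = of_nat N" unfolding N_def by (simp add: sum.If_cases Int_def)
  finally have c1: "coeff P 1 = of_nat N" .
  have "k * d = r * s" using sr dk by (simp add: ac_simps)
  then have "\<not> 3 dvd N" unfolding N_def using count_lemma s0 d0 assms(3,5) by blast
  then have "coeff P 1 \<noteq> 0" using c1 ch of_nat_eq_0_iff_char_dvd[where 'a='a] by metis
  then have P0: "P \<noteq> 0" by auto
  have "\<forall>j>3 ^ (s - 1). coeff P j = 0"
  proof (intro allI impI)
    fix j :: nat assume j: "j > 3 ^ (s - 1)"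
    have "3 ^ ((d*i) mod s) \<le> (3::nat) ^ (s - 1)" for i
      using s0 by (intro power_increasing) (auto simp: less_Suc_eq_le[symmetric])
    then show "coeff P j = 0" unfolding P_def using j
      by (auto simp: coeff_sum coeff_monom intro!: sum.neutral) (metis leD)
  qed
  then have "degree P \<le> 3 ^ (s - 1)" by (rule degree_le)
  also have "\<dots> < 3 ^ s" using s0 by (intro power_strict_increasing) auto
  finally have "card {x. poly P x = 0} < card K0"
    using card_poly_roots_bound[OF P0] assms(7) s by simp
  then obtain lam where lam: "lam \<in> K0" "poly P lam \<noteq> 0"
  proof -
    have "\<not> K0 \<subseteq> {x. poly P x = 0}"
    proof
      assume "K0 \<subseteq> {x. poly P x = 0}"
      from card_mono[OF poly_roots_finite[OF P0] this] \<open>card {x. poly P x = 0} < card K0\<close>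
      show False by simp
    qed
    then show ?thesis using that by blast
  qed
  define T where "T = rel_trace (card K1) k lam"
  have T0: "T \<noteq> 0" using trP lam T_def by simp
  have Tdef: "T = (\<Sum>i<k. lam ^ (3 ^ (d*i)))"
    unfolding T_def rel_trace_def d by (simp add: power_mult)
  have "T ^ (3 ^ d) = (\<Sum>i<k. lam ^ (3 ^ (d * Suc i)))"
    unfolding Tdef fd by (simp add: power_mult[symmetric] power_add[symmetric] ac_simps)
  also have "\<dots> = (\<Sum>i<k. lam ^ (3 ^ (d*i)))"
  proof -
    let ?f = "\<lambda>i. lam ^ (3 ^ (d*i))"
    have "(\<Sum>i<Suc k. ?f i) = ?f 0 + (\<Sum>i<k. ?f (Suc i))" by (rule sum.lessThan_Suc_shift)
    moreover have "(\<Sum>i<Suc k. ?f i) = (\<Sum>i<k. ?f i) + ?f k" by simp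
    moreover have "?f k = ?f 0" using univ dk by simp
    ultimately show ?thesis by (simp add: add.commute)
  qed
  finally have TK1: "T \<in> K1" using K1r Tdef by simp
  have "T ^ (3 ^ s) = (\<Sum>i<k. (lam ^ (3 ^ s)) ^ (3 ^ (d*i)))"
    unfolding Tdef fd by (simp add: power_mult[symmetric] ac_simps)
  also have "\<dots> = T" using lam(1) K0r Tdef by simp
  finally have TK0: "T \<in> K0" using K0r by simp
  have part1: "\<exists>lam\<in>K0. rel_trace (card K1) k lam \<in> K1 \<and> rel_trace (card K1) k lam \<noteq> 0"
    using lam(1) TK1 T0 T_def by blast
  define mu where "mu = inverse T"
  have muK0: "mu \<in> K0" using TK0 T0 assms(6) mu_def unfolding is_subfield_def by blast
  have muK1: "mu \<in> K1" using TK1 T0 K1 mu_def unfolding is_subfield_def by blast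
  have "mu * lam \<in> K0" using muK0 lam(1) assms(6) unfolding is_subfield_def by blast
  moreover have "rel_trace (card K1) k (mu * lam) = 1"
    using trace_scale[of mu "card K1" k lam] subfield_pow_card[of K1 mu] K1 muK1 T0
    by (simp add: T_def[symmetric] mu_def)
  ultimately show "(\<exists>lam\<in>K0. rel_trace (card K1) k lam \<in> K1 \<and> rel_trace (card K1) k lam \<noteq> 0) \<and>
           (\<exists>lam1\<in>K0. rel_trace (card K1) k lam1 = 1)" using part1 by blast
qed

end
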